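(* Every function $f\in\Omega$ is starlike (and univalent) in $\Delta$; that is, $\operatorname{Re}\{zf'(z)/f(z)\}>0$ for all $z\in\Delta$.
   Context: $\Delta=\{z\in\mathbb{C}:|z|<1\}$. $\mathcal{A}$ is the class of functions $f$ analytic in $\Delta$ with $f(0)=0$, $f'(0)=1$, i.e. $f(z)=z+\sum_{n\ge2}a_nz^n$. $\Omega$ is the class of $f\in\mathcal{A}$ with $|zf'(z)-f(z)|<\tfrac12$ for all $z\in\Delta$. *)

theory Defs
  imports "HOL-Complex_Analysis.Complex_Analysis"
begin

abbreviation unit_disc :: "complex set" where
  "unit_disc \<equiv> ball 0 1"

definition classA :: "(complex \<Rightarrow> complex) set" where
  "classA = {f. f holomorphic_on unit_disc \<and> f 0 = 0 \<and> deriv f 0 = 1}"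

definition classOmega :: "(complex \<Rightarrow> complex) set" where
  "classOmega = {f \<in> classA. \<forall>z\<in>unit_disc. norm (z * deriv f z - f z) < 1/2}"

end

theory Submission
  imports Defs
begin

lemma aux_frac: "0 < (x::real) \<Longrightarrow> x < 1 \<Longrightarrow> (x^2/2)/(x*(1-x/2)) = x/(2-x)"
proof -
  assume a: "0 < x" "x < 1"
  have "x*(1-x/2) = x*(2-x)/2" by (simp add: algebra_simps)
  then show ?thesis using a by (simp add: power2_eq_square)
qed

theorem lemma3p1:
  assumes "f \<in> classOmega"
  shows "inj_on f unit_disc \<and>
         (\<forall>z\<in>unit_disc. z \<noteq> 0 \<longrightarrow> f z \<noteq> 0 \<and> Re (z * deriv f z / f z) > 0)"
proof -
  have hf: "f holomorphic_on ball 0 1" and f0: "f 0 = 0" and f'0: "deriv f 0 = 1"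
    and hb: "\<And>z. z \<in> ball 0 1 \<Longrightarrow> norm (z * deriv f z - f z) < 1/2"
    using assms by (auto simp: classOmega_def classA_def)
  define g where "g z = z * deriv f z - f z" for z
  have ob: "open (ball (0::complex) 1)" by simp
  have df: "(f has_field_derivative deriv f z) (at z)" if "z \<in> ball 0 1" for z
    using holomorphic_derivI[OF hf ob that] .
  have hf': "deriv f holomorphic_on ball 0 1" using holomorphic_deriv[OF hf ob] .
  have ddf: "(deriv f has_field_derivative deriv (deriv f) z) (at z)" if "z \<in> ball 0 1" for z
    using holomorphic_derivI[OF hf' ob that] .
  have dg: "(g has_field_derivative (z * deriv (deriv f) z)) (at z)" if "z \<in> ball 0 1" for z
  proof -
    have "((\<lambda>z. z * deriv f z - f z) has_field_derivative
          (1 * deriv f z + z * deriv (deriv f) z - deriv f z)) (at z)"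
      by (rule derivative_eq_intros ddf[OF that] df[OF that] DERIV_ident refl)+ simp
    then show ?thesis unfolding g_def[abs_def] by simp
  qed
  have hg: "g holomorphic_on ball 0 1"
    using dg ob by (metis holomorphic_on_open field_differentiable_def)
  have g0: "g 0 = 0" by (simp add: g_def f0)
  have dg0: "deriv g 0 = 0" using DERIV_imp_deriv[OF dg[of 0]] by simp
  have gb: "norm (g z) < 1/2" if "z \<in> ball 0 1" for z using hb[OF that] by (simp add: g_def)
  have h2g: "(\<lambda>z. 2 * g z) holomorphic_on ball 0 1" by (intro holomorphic_intros hg)
  have gb2: "norm (2 * g z) < 1" if "norm z < 1" for z
    using gb[of z] that by (simp add: norm_mult)
  have g00: "2 * g 0 = 0" by (simp add: g0)
  have S1: "norm (2 * g z) < norm z" if "z \<in> ball 0 1" "z \<noteq> 0" for z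
  proof -
    have le: "norm (2 * g z) \<le> norm z"
      using Schwarz_Lemma(1)[OF h2g g00 gb2, of z] that by simp
    show ?thesis
    proof (rule ccontr)
      assume "\<not> ?thesis"
      then have eqn: "norm (2 * g z) = norm z" using le by simp
      have "\<exists>\<alpha>. (\<forall>w. norm w < 1 \<longrightarrow> 2 * g w = \<alpha> * w) \<and> norm \<alpha> = 1"
        by (rule Schwarz_Lemma(3)[OF h2g g00 gb2, of z]) (use that eqn in auto)
      then obtain \<alpha> where al: "\<forall>w. norm w < 1 \<longrightarrow> 2 * g w = \<alpha> * w" and na: "norm \<alpha> = 1"
        by blast
      have d1: "((\<lambda>w. 2 * g w) has_field_derivative 2 * (0 * deriv (deriv f) 0)) (at 0)"
        by (rule DERIV_cmult, rule dg) simp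
      have d2: "((\<lambda>w. 2 * g w) has_field_derivative \<alpha>) (at 0)"
      proof (rule has_field_derivative_transform_within_open[where S="ball 0 1" and f="\<lambda>w. \<alpha> * w"])
        show "((*) \<alpha> has_field_derivative \<alpha>) (at 0)" by (auto intro!: derivative_eq_intros)
      qed (use al in auto)
      have "\<alpha> = 0" using DERIV_unique[OF d2 d1] by simp
      with na show False by simp
    qed
  qed
  define G where "G z = (if z = 0 then deriv g 0 else (g z - g 0) / (z - 0))" for z
  have hG: "G holomorphic_on ball 0 1"
    unfolding G_def[abs_def] by (rule pole_lemma[OF hg]) (simp add: interior_open)
  have G0: "G 0 = 0" by (simp add: G_def dg0)
  have Gz: "G z = g z / z" if "z \<noteq> 0" for z using that by (simp add: G_def g0)
  have h2G: "(\<lambda>z. 2 * G z) holomorphic_on ball 0 1" by (intro holomorphic_intros hG)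
  have g2: "norm (g z) \<le> norm z ^ 2 / 2" if "z \<in> ball 0 1" for z
  proof (cases "z = 0")
    case True then show ?thesis by (simp add: g0)
  next
    case False
    have "norm (2 * G z) \<le> norm z"
    proof (rule Schwarz_Lemma(1)[OF h2G])
      show "2 * G 0 = 0" by (simp add: G0)
      show "norm (2 * G w) < 1" if "norm w < 1" for w
      proof (cases "w = 0")
        case True then show ?thesis by (simp add: G0)
      next
        case False
        have "norm (2 * g w) < norm w" using S1[of w] that False by simp
        then show ?thesis using False by (simp add: Gz norm_divide divide_less_eq)
      qed
      show "norm z < 1" using that by simp
    qed
    then have "norm (2 * g z) / norm z \<le> norm z" using False
      by (simp add: Gz norm_divide norm_mult)
    then have "norm (2 * g z) \<le> norm z * norm z" using False by (simp add: divide_le_eq)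
    then show ?thesis by (simp add: norm_mult power2_eq_square)
  qed
  define P where "P z = (if z = 0 then deriv f 0 else (f z - f 0) / (z - 0))" for z
  have hP: "P holomorphic_on ball 0 1"
    unfolding P_def[abs_def] by (rule pole_lemma[OF hf]) (simp add: interior_open)
  have P0: "P 0 = 1" by (simp add: P_def f'0)
  have Pz: "P z = f z / z" if "z \<noteq> 0" for z using that by (simp add: P_def f0)
  have dP: "(P has_field_derivative g w / w^2) (at w)" if "w \<in> ball 0 1" "w \<noteq> 0" for w
  proof (rule has_field_derivative_transform_within_open[where S="ball 0 1 - {0}" and f="\<lambda>z. f z / z"])
    have "((\<lambda>z. f z / z) has_field_derivative (deriv f w * w - f w * 1) / (w * w)) (at w)"
      by (rule DERIV_divide[OF df[OF that(1)]]) (auto simp: that)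
    then show "((\<lambda>z. f z / z) has_field_derivative g w / w^2) (at w)"
      by (simp add: g_def power2_eq_square algebra_simps)
  qed (use that Pz in auto)
  have dPb: "norm (deriv P w) \<le> 1/2" if "w \<in> ball 0 1" for w
  proof -
    have nz: "norm (deriv P w) \<le> 1/2" if "w \<in> ball 0 1" "w \<noteq> 0" for w
    proof -
      have "deriv P w = g w / w^2" using DERIV_imp_deriv[OF dP[OF that]] .
      also have "norm \<dots> \<le> 1/2" using g2[OF that(1)] that(2)
        by (simp add: norm_divide norm_power divide_le_eq)
      finally show ?thesis .
    qed
    show ?thesis
    proof (cases "w = 0")
      case False with nz that show ?thesis by blast
    next
      case True
      have "continuous_on (ball 0 1) (deriv P)"
        using holomorphic_deriv[OF hP ob] holomorphic_on_imp_continuous_on by blast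
      then have "(deriv P \<longlongrightarrow> deriv P 0) (at 0)"
        using ob by (simp add: continuous_on_eq_continuous_at isCont_def)
      moreover have "eventually (\<lambda>x. norm (deriv P x) \<le> 1/2) (at 0)"
      proof -
        have "eventually (\<lambda>x. x \<in> ball 0 1) (at (0::complex))"
          using ob by (intro eventually_at_in_open') auto
        moreover have "eventually (\<lambda>x. x \<noteq> 0) (at (0::complex))"
          by (simp add: eventually_at_filter)
        ultimately show ?thesis by eventually_elim (use nz in auto)
      qed
      ultimately have "norm (deriv P 0) \<le> 1/2"
        by (intro Lim_norm_ubound) auto
      then show ?thesis using True by simp
    qed
  qed
  have Pb: "norm (P z - 1) \<le> norm z / 2" if "z \<in> ball 0 1" for z
  proof -
    have "norm (P z - P 0) \<le> 1/2 * norm (z - 0)"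
      by (rule field_differentiable_bound[where S="ball 0 1" and f'="deriv P"])
         (use that dPb holomorphic_derivI[OF hP ob] in auto)
    then show ?thesis by (simp add: P0)
  qed
  have fz: "f z = z * P z" if "z \<in> ball 0 1" for z
    by (cases "z = 0") (auto simp: f0 Pz)
  have Plow: "norm (P z) \<ge> 1 - norm z / 2" if "z \<in> ball 0 1" for z
    using Pb[OF that] norm_triangle_ineq2[of 1 "P z"] norm_minus_commute[of 1 "P z"] by simp
  have star: "f z \<noteq> 0 \<and> Re (z * deriv f z / f z) > 0" if "z \<in> ball 0 1" "z \<noteq> 0" for z
  proof -
    have nz1: "norm z < 1" using that by simp
    have Pp: "norm (P z) > 0" using Plow[OF that(1)] nz1 by linarith
    have fnz: "f z \<noteq> 0" using fz[OF that(1)] Pp that(2) by auto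
    have eq: "z * deriv f z / f z = 1 + g z / f z"
      using fnz by (simp add: g_def field_simps)
    have "norm (g z / f z) \<le> (norm z ^ 2 / 2) / (norm z * (1 - norm z / 2))"
    proof -
      have "norm (f z) \<ge> norm z * (1 - norm z / 2)"
        using fz[OF that(1)] Plow[OF that(1)] by (simp add: norm_mult mult_left_mono)
      moreover have "norm z * (1 - norm z / 2) > 0" using nz1 that(2) by simp
      ultimately show ?thesis using g2[OF that(1)] unfolding norm_divide
        by (intro frac_le) auto
    qed
    also have "\<dots> = norm z / (2 - norm z)"
      using that(2) nz1 by (intro aux_frac) auto
    also have "\<dots> < 1" using nz1 by (simp add: divide_less_eq)
    finally have lt: "norm (g z / f z) < 1" .
    have "Re (g z / f z) > -1"
      using abs_Re_le_cmod[of "g z / f z"] lt by linarith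
    then show ?thesis using fnz eq by simp
  qed
  have dfb: "norm (deriv f z - 1) \<le> norm z" if "z \<in> ball 0 1" for z
  proof (cases "z = 0")
    case True then show ?thesis by (simp add: f'0)
  next
    case False
    have "deriv f z = g z / z + P z" using False by (simp add: g_def Pz field_simps)
    then have "norm (deriv f z - 1) \<le> norm (g z / z) + norm (P z - 1)"
      by (metis add_diff_eq norm_triangle_ineq)
    also have "norm (g z / z) \<le> norm z / 2"
      using g2[OF that] False by (simp add: norm_divide divide_le_eq power2_eq_square)
    finally show ?thesis using Pb[OF that] by simp
  qed
  have inj: "inj_on f (ball 0 1)"
  proof (rule inj_onI)
    fix a b assume a: "a \<in> ball (0::complex) 1" and b: "b \<in> ball (0::complex) 1" and e: "f a = f b"
    define r where "r = max (norm a) (norm b)"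
    have r1: "r < 1" using a b by (simp add: r_def)
    have sub: "cball 0 r \<subseteq> ball (0::complex) 1" using r1 by auto
    have "norm ((f a - a) - (f b - b)) \<le> r * norm (a - b)"
    proof (rule field_differentiable_bound[where S="cball 0 r" and f'="\<lambda>z. deriv f z - 1"])
      show "((\<lambda>z. f z - z) has_field_derivative deriv f z - 1) (at z within cball 0 r)"
        if "z \<in> cball 0 r" for z
      proof -
        have "z \<in> ball 0 1" using sub that by blast
        then have "((\<lambda>z. f z - z) has_field_derivative deriv f z - 1) (at z)"
          by (intro DERIV_diff df DERIV_ident)
        then show ?thesis by (rule has_field_derivative_at_within)
      qed
      show "norm (deriv f z - 1) \<le> r" if "z \<in> cball 0 r" for z
        using dfb[of z] sub that by force
    qed (auto simp: r_def)
    then have "norm (a - b) \<le> r * norm (a - b)" using e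
      by (simp add: norm_minus_commute)
    then show "a = b" using r1
      by (metis mult_less_cancel_right2 norm_ge_zero not_le right_minus_eq zero_less_norm_iff)
  qed
  show ?thesis using inj star by blast
qed

end
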